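(* Let $\boldsymbol{a},\boldsymbol{b},\boldsymbol{c}\in\mathbb{R}^3$ be pairwise distinct points carrying vorticity vectors $\boldsymbol{\omega}(\boldsymbol{a}),\boldsymbol{\omega}(\boldsymbol{b}),\boldsymbol{\omega}(\boldsymbol{c})\in\mathbb{R}^3$. With $D$ and $F_{\boldsymbol{\omega}}$ as defined in the context, \[D(\boldsymbol{a},\boldsymbol{b},\boldsymbol{c})+D(\boldsymbol{c},\boldsymbol{b},\boldsymbol{a})=(\boldsymbol{\omega}(\boldsymbol{b})\cdot\nabla_{\boldsymbol{b}})\big[F_{\boldsymbol{\omega}}(\boldsymbol{a},\boldsymbol{b},\boldsymbol{c})+F_{\boldsymbol{\omega}}(\boldsymbol{c},\boldsymbol{b},\boldsymbol{a})\big],\] where on the right the directional derivative in direction $\boldsymbol{\omega}(\boldsymbol{b})$ is taken with respect to the position $\boldsymbol{b}$, with $\boldsymbol{a},\boldsymbol{c},\boldsymbol{\omega}(\boldsymbol{a}),\boldsymbol{\omega}(\boldsymbol{c})$ held fixed.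
   Context: Interaction energy: for vorticity vectors $\boldsymbol{\beta},\boldsymbol{\gamma}_0$ at distinct points $\boldsymbol{b},\boldsymbol{c}$, \[I(\boldsymbol{\beta},\boldsymbol{\gamma}_0,\boldsymbol{c}-\boldsymbol{b})=\frac{1}{16\pi\|\boldsymbol{c}-\boldsymbol{b}\|}\Big[\boldsymbol{\beta}\cdot\boldsymbol{\gamma}_0+\frac{(\boldsymbol{\beta}\cdot(\boldsymbol{c}-\boldsymbol{b}))(\boldsymbol{\gamma}_0\cdot(\boldsymbol{c}-\boldsymbol{b}))}{\|\boldsymbol{c}-\boldsymbol{b}\|^2}\Big].\] The velocity induced at position $\boldsymbol{b}$ by the vorticity at $\boldsymbol{a}$ is $\boldsymbol{v}_{\boldsymbol{a}}(\boldsymbol{b})=\frac{1}{4\pi}\frac{\boldsymbol{\omega}(\boldsymbol{a})\times(\boldsymbol{b}-\boldsymbol{a})}{\|\boldsymbol{a}-\boldsymbol{b}\|^3}$ (Biot–Savart); under the vorticity form of the 3D Euler equations it moves $\boldsymbol{b}$ at rate $\boldsymbol{v}_{\boldsymbol{a}}(\boldsymbol{b})$ and changes the vorticity at $\boldsymbol{b}$ at rate $(\boldsymbol{\omega}(\boldsymbol{b})\cdot\nabla_{\boldsymbol{b}})\boldsymbol{v}_{\boldsymbol{a}}(\boldsymbol{b})$. The effect of $\boldsymbol{a}$'s induced velocity on $\boldsymbol{b}$ on the interaction energy between $\boldsymbol{b}$ and $\boldsymbol{c}$ is \[D(\boldsymbol{a},\boldsymbol{b},\boldsymbol{c})=\nabla_{\boldsymbol{b}}I(\boldsymbol{\beta},\boldsymbol{\omega}(\boldsymbol{c}),\boldsymbol{c}-\boldsymbol{b})\big|_{\boldsymbol{\beta}=\boldsymbol{\omega}(\boldsymbol{b})}\cdot\boldsymbol{v}_{\boldsymbol{a}}(\boldsymbol{b})+\nabla_{\boldsymbol{\beta}}I(\boldsymbol{\beta},\boldsymbol{\omega}(\boldsymbol{c}),\boldsymbol{c}-\boldsymbol{b})\big|_{\boldsymbol{\beta}=\boldsymbol{\omega}(\boldsymbol{b})}\cdot\big((\boldsymbol{\omega}(\boldsymbol{b})\cdot\nabla_{\boldsymbol{b}})\boldsymbol{v}_{\boldsymbol{a}}(\boldsymbol{b})\big),\]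 with the position gradient in the first term taken holding the vorticity argument $\boldsymbol{\beta}$ fixed. The interaction energy flow is \[F_{\boldsymbol{\omega}}(\boldsymbol{a},\boldsymbol{b},\boldsymbol{c})=\frac{1}{64\pi^2}\left[\frac{((\boldsymbol{a}-\boldsymbol{b})\times\boldsymbol{\omega}(\boldsymbol{a}))\cdot\boldsymbol{\omega}(\boldsymbol{c})}{\|\boldsymbol{a}-\boldsymbol{b}\|^3\,\|\boldsymbol{c}-\boldsymbol{b}\|}+\frac{\big(((\boldsymbol{b}-\boldsymbol{a})\times(\boldsymbol{b}-\boldsymbol{c}))\cdot\boldsymbol{\omega}(\boldsymbol{a})\big)\big((\boldsymbol{b}-\boldsymbol{c})\cdot\boldsymbol{\omega}(\boldsymbol{c})\big)}{\|\boldsymbol{a}-\boldsymbol{b}\|^3\,\|\boldsymbol{c}-\boldsymbol{b}\|^3}\right].\] *)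

theory Defs
  imports "HOL-Analysis.Analysis"
begin

text \<open>Interaction energy I(beta, gamma0, r), with r = c - b.\<close>
definition inter_energy :: "real^3 \<Rightarrow> real^3 \<Rightarrow> real^3 \<Rightarrow> real" where
  "inter_energy \<beta> \<gamma> r =
     (1 / (16 * pi * norm r)) * (\<beta> \<bullet> \<gamma> + ((\<beta> \<bullet> r) * (\<gamma> \<bullet> r)) / (norm r)^2)"

text \<open>Biot-Savart velocity induced at x by vorticity wa located at a.\<close>
definition induced_vel :: "real^3 \<Rightarrow> real^3 \<Rightarrow> real^3 \<Rightarrow> real^3" where
  "induced_vel a wa x = (1 / (4 * pi * (norm (a - x))^3)) *\<^sub>R cross3 wa (x - a)"

text \<open>D(a,b,c): gradients written as Frechet derivatives applied to a direction.\<close>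
definition Dflow :: "real^3 \<Rightarrow> real^3 \<Rightarrow> real^3 \<Rightarrow> real^3 \<Rightarrow> real^3 \<Rightarrow> real^3 \<Rightarrow> real" where
  "Dflow a wa b wb c wc =
     frechet_derivative (\<lambda>x. inter_energy wb wc (c - x)) (at b) (induced_vel a wa b)
   + frechet_derivative (\<lambda>\<beta>. inter_energy \<beta> wc (c - b)) (at wb)
       (frechet_derivative (\<lambda>x. induced_vel a wa x) (at b) wb)"

definition Fflow :: "real^3 \<Rightarrow> real^3 \<Rightarrow> real^3 \<Rightarrow> real^3 \<Rightarrow> real^3 \<Rightarrow> real" where
  "Fflow a wa b c wc =
     (1 / (64 * pi^2)) *
     ((cross3 (a - b) wa \<bullet> wc) / ((norm (a - b))^3 * norm (c - b))
      + ((cross3 (b - a) (b - c) \<bullet> wa) * ((b - c) \<bullet> wc))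
          / ((norm (a - b))^3 * (norm (c - b))^3))"

end

theory Submission imports Defs begin

definition "Dg wb wc r R h = (1/(16*pi)) * ( -(wb\<bullet>wc)*(r\<bullet>h)/R^3 + ((wb\<bullet>h)*(wc\<bullet>r) + (wb\<bullet>r)*(wc\<bullet>h))/R^3
          - 3*(wb\<bullet>r)*(wc\<bullet>r)*(r\<bullet>h)/R^5)"
definition "Db wc r R d = (1/(16*pi*R))*(d\<bullet>wc + (d\<bullet>r)*(wc\<bullet>r)/R^2)"
definition "Dv wa p P w = (1/(4*pi*P^3)) *\<^sub>R cross3 wa w + (3*(p\<bullet>w)/(4*pi*P^5)) *\<^sub>R cross3 p wa"
definition "Uv wa p P = (1/(4*pi*P^3)) *\<^sub>R cross3 p wa"
definition "DF wa wc p P q Q h = 1/(64*pi^2)*( (cross3 (-h) wa \<bullet> wc)/(P^3 * Q)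
   - (cross3 p wa \<bullet> wc)*(3*(-(p\<bullet>h)/P)/(P^4*Q) + (-(q\<bullet>h)/Q)/(P^3*Q^2))
   + ((cross3 h (-q) + cross3 (-p) h)\<bullet>wa * ((-q)\<bullet>wc) + (cross3 (-p) (-q)\<bullet>wa)*(h\<bullet>wc))/(P^3 * Q^3)
   - (cross3 (-p) (-q) \<bullet> wa)*((-q)\<bullet>wc)*(3*(-(p\<bullet>h)/P)/(P^4 * Q^3) + 3*(-(q\<bullet>h)/Q)/(P^3 * Q^4)))"

definition "S5 P Q x1 x2 x3 x4 x5 = (1/(64*pi^2)) * (x1/(P^3*Q) + x2/(P^5*Q) + x3/(P^3*Q^3) + x4/(P^3*Q^5) + x5/(P^5*Q^3))"

lemma S5_gen:
  fixes k x1 x2 x3 x4 x5 y1 y2 y3 y4 y5 u1 u2 u3 u4 u5 v1 v2 v3 v4 v5 d1 d2 d3 d4 d5 e1 e2 :: real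
  shows "k*(x1/d1 + x2/d2 + x3/d3 + x4/d4 + x5/d5) + k*(y1/e1 + y2/e2 + y3/d3 + y4/d5 + y5/d4)
    - (k*(u1/d1 + u2/d2 + u3/d3 + u4/d4 + u5/d5) + k*(v1/e1 + v2/e2 + v3/d3 + v4/d5 + v5/d4))
   = k*((x1-u1)/d1 + (y1-v1)/e1 + (x2-u2)/d2 + (y2-v2)/e2 + (x3+y3-u3-v3)/d3 + (x4+y5-u4-v5)/d4 + (x5+y4-u5-v4)/d5)"
  by (simp add: diff_divide_distrib add_divide_distrib algebra_simps)

lemma S5_comb:
  fixes P Q :: real assumes "P \<noteq> 0" "Q \<noteq> 0"
  shows "S5 P Q x1 x2 x3 x4 x5 + S5 Q P y1 y2 y3 y4 y5 - (S5 P Q u1 u2 u3 u4 u5 + S5 Q P v1 v2 v3 v4 v5)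
   = (1/(64*pi^2)) * ((x1-u1)/(P^3*Q) + (y1-v1)/(Q^3*P) + (x2-u2)/(P^5*Q) + (y2-v2)/(Q^5*P)
      + (x3+y3-u3-v3)/(P^3*Q^3) + (x4+y5-u4-v5)/(P^3*Q^5) + (x5+y4-u5-v4)/(P^5*Q^3))"
proof -
  have e: "Q^3*P^3 = P^3*Q^3" "Q^3*P^5 = P^5*Q^3" "Q^5*P^3 = P^3*Q^5" by (simp_all add: mult.commute)
  show ?thesis unfolding S5_def e by (rule S5_gen)
qed

lemma lhs_form:
  fixes p q wa wb wc :: "real^3" and P Q :: real
  assumes "P \<noteq> 0" "Q \<noteq> 0"
  shows "Dg wb wc q Q (- Uv wa p P) + Db wc q Q (Dv wa p P wb) =
    S5 P Q (cross3 wa wb \<bullet> wc) (3*(p\<bullet>wb)*(cross3 p wa\<bullet>wc))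
     ((wb\<bullet>wc)*(q\<bullet>cross3 p wa) - (wb\<bullet>cross3 p wa)*(wc\<bullet>q) - (wb\<bullet>q)*(wc\<bullet>cross3 p wa) + (cross3 wa wb\<bullet>q)*(wc\<bullet>q))
     (3*(wb\<bullet>q)*(wc\<bullet>q)*(q\<bullet>cross3 p wa))
     (3*(p\<bullet>wb)*(cross3 p wa\<bullet>q)*(wc\<bullet>q))"
  unfolding Dg_def Db_def Dv_def Uv_def S5_def
  using assms
  by (simp add: inner_add_left inner_add_right inner_commute field_simps power_add eval_nat_numeral)

lemma rhs_form:
  fixes p q wa wb wc :: "real^3" and P Q :: real
  assumes "P \<noteq> 0" "Q \<noteq> 0"
  shows "DF wa wc p P q Q wb =
    S5 P Q (cross3 (-wb) wa \<bullet> wc) (3*(cross3 p wa\<bullet>wc)*(p\<bullet>wb))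
     ((cross3 p wa\<bullet>wc)*(q\<bullet>wb) + (cross3 wb (-q) + cross3 (-p) wb)\<bullet>wa * ((-q)\<bullet>wc) + (cross3 (-p) (-q)\<bullet>wa)*(wb\<bullet>wc))
     (3*(cross3 (-p) (-q)\<bullet>wa)*((-q)\<bullet>wc)*(q\<bullet>wb))
     (3*(cross3 (-p) (-q)\<bullet>wa)*((-q)\<bullet>wc)*(p\<bullet>wb))"
  unfolding DF_def S5_def
  using assms
  by (simp add: field_simps power_add eval_nat_numeral)

lemma S5_eq:
  fixes P Q :: real assumes "P \<noteq> 0" "Q \<noteq> 0"
  and "x1=u1" "y1=v1" "x2=u2" "y2=v2" "x3+y3=u3+v3" "x4+y5=u4+v5" "x5+y4=u5+v4"
  shows "S5 P Q x1 x2 x3 x4 x5 + S5 Q P y1 y2 y3 y4 y5 = S5 P Q u1 u2 u3 u4 u5 + S5 Q P v1 v2 v3 v4 v5"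
proof -
  have "S5 P Q x1 x2 x3 x4 x5 + S5 Q P y1 y2 y3 y4 y5 - (S5 P Q u1 u2 u3 u4 u5 + S5 Q P v1 v2 v3 v4 v5) = 0"
    unfolding S5_comb[OF assms(1,2)] using assms(3-) by simp
  then show ?thesis by simp
qed

lemma core:
  fixes p q wa wb wc :: "real^3" and P Q :: real
  assumes "P \<noteq> 0" "Q \<noteq> 0"
  shows "Dg wb wc q Q (- Uv wa p P) + Db wc q Q (Dv wa p P wb)
       + (Dg wb wa p P (- Uv wc q Q) + Db wa p P (Dv wc q Q wb))
       = DF wa wc p P q Q wb + DF wc wa q Q p P wb"
  unfolding lhs_form[OF assms] lhs_form[OF assms(2,1)] rhs_form[OF assms] rhs_form[OF assms(2,1)]
  apply (rule S5_eq[OF assms])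
  by (simp_all add: cross3_def inner_vec_def sum_3 vector_def algebra_simps)

lemma bb_cross3: "bounded_bilinear cross3"
  using bilinear_conv_bounded_bilinear bilinear_cross by blast

lemmas has_derivative_cross3[derivative_intros] = bounded_bilinear.FDERIV[OF bb_cross3]

lemma hd_norm[derivative_intros]:
  fixes f :: "'a::real_normed_vector \<Rightarrow> 'b::real_inner"
  assumes "f x \<noteq> 0" "(f has_derivative f') (at x)"
  shows "((\<lambda>y. norm (f y)) has_derivative (\<lambda>h. f' h \<bullet> sgn (f x))) (at x)"
  using has_derivative_compose[OF assms(2) has_derivative_norm[OF assms(1)]] by simp

lemma inner_sgn: "(x::real^3) \<bullet> sgn y = (x \<bullet> y) / norm y"
  by (simp add: sgn_div_norm divide_inverse mult.commute)

lemma cross_flip: "cross3 wa (b - a) = cross3 (a - b) wa"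
  by (simp add: cross3_def vec_eq_iff vector_def algebra_simps)

lemma dI_r:
  fixes r wb wc :: "real^3"
  assumes "r \<noteq> 0"
  shows "((\<lambda>x. inter_energy wb wc x) has_derivative Dg wb wc r (norm r)) (at r)"
  unfolding inter_energy_def
  apply (rule derivative_eq_intros refl | simp add: assms)+
  apply (rule ext)
  apply (simp add: Dg_def sgn_div_norm inner_commute field_simps eval_nat_numeral)
  done

lemma dI_x:
  fixes b c wb wc :: "real^3"
  assumes "c \<noteq> b"
  shows "((\<lambda>x. inter_energy wb wc (c - x)) has_derivative (\<lambda>h. Dg wb wc (c-b) (norm (c-b)) (-h))) (at b)"
proof -
  have "((\<lambda>x. c - x) has_derivative (\<lambda>h. - h)) (at b)"
    by (rule derivative_eq_intros refl)+ simp
  from has_derivative_compose[OF this dI_r[of "c-b" wb wc]] assms show ?thesis by simp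
qed

lemma dI_beta:
  fixes r wc \<beta>0 :: "real^3"
  assumes "r \<noteq> 0"
  shows "((\<lambda>\<beta>. inter_energy \<beta> wc r) has_derivative Db wc r (norm r)) (at \<beta>0)"
  unfolding inter_energy_def
  apply (rule derivative_eq_intros refl | simp add: assms)+
  apply (rule ext)
  apply (simp add: Db_def inner_commute field_simps)
  done

lemma dV:
  fixes a b wa :: "real^3"
  assumes "a \<noteq> b"
  shows "(induced_vel a wa has_derivative Dv wa (a-b) (norm (a-b))) (at b)"
proof -
  have ne: "a - b \<noteq> 0" using assms by simp
  show ?thesis
  unfolding induced_vel_def[abs_def]
  apply (rule derivative_eq_intros refl | simp add: assms ne)+
  apply (rule ext)
  apply (simp add: Dv_def inner_sgn cross_flip inner_commute field_simps eval_nat_numeral)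
  done
qed

lemma dF:
  fixes a b c wa wc :: "real^3"
  assumes "a \<noteq> b" "c \<noteq> b"
  shows "((\<lambda>x. Fflow a wa x c wc) has_derivative DF wa wc (a-b) (norm (a-b)) (c-b) (norm (c-b))) (at b)"
proof -
  have ne: "a - b \<noteq> 0" "c - b \<noteq> 0" using assms by auto
  show ?thesis
  unfolding Fflow_def
  apply (rule derivative_eq_intros refl | simp add: assms ne)+
  apply (rule ext)
  apply (simp add: DF_def inner_sgn inner_commute field_simps eval_nat_numeral)
  done
qed

theorem proposition3:
  fixes a b c wa wb wc :: "real^3"
  assumes "a \<noteq> b" and "b \<noteq> c" and "a \<noteq> c"
  shows "Dflow a wa b wb c wc + Dflow c wc b wb a wa =
         frechet_derivative (\<lambda>x. Fflow a wa x c wc + Fflow c wc x a wa) (at b) wb"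
proof -
  have ab: "a \<noteq> b" and cb: "c \<noteq> b" using assms by auto
  have ab0: "a - b \<noteq> 0" and cb0: "c - b \<noteq> 0" using ab cb by auto
  have P0: "norm (a - b) \<noteq> 0" and Q0: "norm (c - b) \<noteq> 0" using ab cb by auto
  have uva: "induced_vel a wa b = Uv wa (a-b) (norm (a-b))"
    unfolding induced_vel_def Uv_def by (simp add: cross_flip norm_minus_commute)
  have uvc: "induced_vel c wc b = Uv wc (c-b) (norm (c-b))"
    unfolding induced_vel_def Uv_def by (simp add: cross_flip norm_minus_commute)
  have f1: "frechet_derivative (\<lambda>x. inter_energy wb wc (c - x)) (at b) = (\<lambda>h. Dg wb wc (c-b) (norm (c-b)) (-h))"
    using frechet_derivative_at[OF dI_x[OF cb, of wb wc]] by simp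
  have f2: "frechet_derivative (\<lambda>x. inter_energy wb wa (a - x)) (at b) = (\<lambda>h. Dg wb wa (a-b) (norm (a-b)) (-h))"
    using frechet_derivative_at[OF dI_x[OF ab, of wb wa]] by simp
  have f3: "frechet_derivative (\<lambda>\<beta>. inter_energy \<beta> wc (c - b)) (at wb) = Db wc (c-b) (norm (c-b))"
    using frechet_derivative_at[OF dI_beta[OF cb0, of wc wb]] by simp
  have f4: "frechet_derivative (\<lambda>\<beta>. inter_energy \<beta> wa (a - b)) (at wb) = Db wa (a-b) (norm (a-b))"
    using frechet_derivative_at[OF dI_beta[OF ab0, of wa wb]] by simp
  have f5: "frechet_derivative (\<lambda>x. induced_vel a wa x) (at b) = Dv wa (a-b) (norm (a-b))"
    using frechet_derivative_at[OF dV[OF ab, of wa]] by simp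
  have f6: "frechet_derivative (\<lambda>x. induced_vel c wc x) (at b) = Dv wc (c-b) (norm (c-b))"
    using frechet_derivative_at[OF dV[OF cb, of wc]] by simp
  have hF: "((\<lambda>x. Fflow a wa x c wc + Fflow c wc x a wa) has_derivative
      (\<lambda>h. DF wa wc (a-b) (norm (a-b)) (c-b) (norm (c-b)) h + DF wc wa (c-b) (norm (c-b)) (a-b) (norm (a-b)) h)) (at b)"
    by (rule has_derivative_add[OF dF[OF ab cb] dF[OF cb ab]])
  have f7: "frechet_derivative (\<lambda>x. Fflow a wa x c wc + Fflow c wc x a wa) (at b) =
      (\<lambda>h. DF wa wc (a-b) (norm (a-b)) (c-b) (norm (c-b)) h + DF wc wa (c-b) (norm (c-b)) (a-b) (norm (a-b)) h)"
    using frechet_derivative_at[OF hF] by simp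
  show ?thesis
    unfolding Dflow_def f1 f2 f3 f4 f5 f6 f7 uva uvc
    using core[OF P0 Q0, of wb wc "c-b" wa "a-b"] by simp
qed

end
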